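(* Let $0<\lambda<n$ and $1\le p<\infty$. There exist functions $f\in V_0L^{p,\lambda}\cap V_\infty L^{p,\lambda}$ which do not satisfy $\lim_{N\to\infty}\sup_{x\in\mathbb{R}^n}\int_{B(x,1)}|f(y)|^p\chi_{\mathbb{R}^n\setminus B(0,N)}(y)\,dy=0$.
   Context: $B(x,r)$ is the open ball in $\mathbb{R}^n$ with center $x$ and radius $r$. For $f\in L^1_{\mathrm{loc}}(\mathbb{R}^n)$ let $\mathfrak{M}_{p,\lambda}(f;x,r):=r^{-\lambda}\int_{B(x,r)}|f(y)|^p\,dy$. The homogeneous Morrey space $L^{p,\lambda}(\mathbb{R}^n)$ consists of $f\in L^p_{\mathrm{loc}}(\mathbb{R}^n)$ with $\|f\|_{p,\lambda}:=\sup_{x\in\mathbb{R}^n,\,r>0}\mathfrak{M}_{p,\lambda}(f;x,r)^{1/p}<\infty$. $V_0L^{p,\lambda}=\{f\in L^{p,\lambda}:\lim_{r\to0}\sup_{x}\mathfrak{M}_{p,\lambda}(f;x,r)=0\}$ and $V_\infty L^{p,\lambda}=\{f\in L^{p,\lambda}:\lim_{r\to\infty}\sup_{x}\mathfrak{M}_{p,\lambda}(f;x,r)=0\}$. *)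

theory Defs
  imports "HOL-Analysis.Analysis"
begin

definition morrey_M :: "real \<Rightarrow> real \<Rightarrow> ('a::euclidean_space \<Rightarrow> real) \<Rightarrow> 'a \<Rightarrow> real \<Rightarrow> ennreal" where
  "morrey_M p lam f x r =
     ennreal (r powr (- lam)) * (\<integral>\<^sup>+ y \<in> ball x r. ennreal (\<bar>f y\<bar> powr p) \<partial>lebesgue)"

definition morrey_space :: "real \<Rightarrow> real \<Rightarrow> ('a::euclidean_space \<Rightarrow> real) set" where
  "morrey_space p lam =
     {f. f \<in> borel_measurable lebesgue \<and>
         (\<forall>x r. 0 < r \<longrightarrow> (\<integral>\<^sup>+ y \<in> ball x r. ennreal (\<bar>f y\<bar> powr p) \<partial>lebesgue) < \<infinity>) \<and>
         (SUP xr \<in> UNIV \<times> {0<..}. morrey_M p lam f (fst xr) (snd xr)) < \<infinity>}"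

definition V0_morrey :: "real \<Rightarrow> real \<Rightarrow> ('a::euclidean_space \<Rightarrow> real) set" where
  "V0_morrey p lam = {f \<in> morrey_space p lam.
     ((\<lambda>r. SUP x. morrey_M p lam f x r) \<longlongrightarrow> 0) (at_right 0)}"

definition Vinf_morrey :: "real \<Rightarrow> real \<Rightarrow> ('a::euclidean_space \<Rightarrow> real) set" where
  "Vinf_morrey p lam = {f \<in> morrey_space p lam.
     ((\<lambda>r. SUP x. morrey_M p lam f x r) \<longlongrightarrow> 0) at_top}"

end

theory Submission
  imports Defs "HOL-Real_Asymp.Real_Asymp"
begin

definition ce :: "nat \<Rightarrow> 'a::euclidean_space" where
  "ce k = ((2::real) ^ k) *\<^sub>R (SOME e. e \<in> (Basis::'a set))"

definition SS :: "'a::euclidean_space set" where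
  "SS = (\<Union>k. ball (ce k) (1/2))"

lemma norm_e: "norm (SOME e. e \<in> (Basis::'a::euclidean_space set)) = 1"
proof -
  have "(SOME e. e \<in> (Basis::'a set)) \<in> Basis" by (rule someI_ex) (use nonempty_Basis in blast)
  thus ?thesis by (rule norm_Basis)
qed

lemma dist_ce: "dist (ce k) (ce j :: 'a::euclidean_space) = \<bar>2^k - 2^j\<bar>"
proof -
  have "dist (ce k) (ce j :: 'a) = norm (((2::real)^k - 2^j) *\<^sub>R (SOME e. e \<in> (Basis::'a set)))"
    by (simp add: ce_def dist_norm scaleR_diff_left)
  also have "\<dots> = \<bar>2^k - 2^j\<bar>" using norm_e[where 'a='a] by simp
  finally show ?thesis .
qed

lemma norm_ce: "norm (ce k :: 'a::euclidean_space) = 2^k"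
  using norm_e[where 'a='a] by (simp add: ce_def)

lemma SS_open: "open (SS :: 'a::euclidean_space set)"
  unfolding SS_def by auto

lemma open_leb: "open (S::'a::euclidean_space set) \<Longrightarrow> S \<in> sets lebesgue" by auto

lemma SS_sets: "(SS :: 'a::euclidean_space set) \<in> sets lebesgue"
  using SS_open by (rule open_leb)

lemma fpow: assumes "p > 0"
  shows "ennreal (\<bar>indicator SS y :: real\<bar> powr p) = indicator SS y"
  using assms by (cases "y \<in> SS") auto

lemma int_eq:
  assumes "p > 0" "A \<in> sets lebesgue"
  shows "(\<integral>\<^sup>+ y \<in> A. ennreal (\<bar>indicator SS y :: real\<bar> powr p) \<partial>lebesgue)
     = emeasure lebesgue (SS \<inter> A)"
proof -
  have "(\<integral>\<^sup>+ y \<in> A. ennreal (\<bar>indicator SS y :: real\<bar> powr p) \<partial>lebesgue)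
       = (\<integral>\<^sup>+ y. indicator (SS \<inter> A) y \<partial>lebesgue)"
    by (rule nn_integral_cong) (use assms(1) in \<open>auto simp: indicator_def\<close>)
  also have "\<dots> = emeasure lebesgue (SS \<inter> A)"
    using assms SS_sets by (intro nn_integral_indicator) auto
  finally show ?thesis .
qed

lemma boundA:
  assumes "r \<ge> 0"
  shows "emeasure lebesgue (SS \<inter> ball (x::'a::euclidean_space) r)
     \<le> ennreal (unit_ball_vol (DIM('a)) * r ^ DIM('a))"
proof -
  have "emeasure lebesgue (SS \<inter> ball x r) \<le> emeasure lebesgue (ball x r)"
    by (intro emeasure_mono) auto
  also have "\<dots> = ennreal (unit_ball_vol (DIM('a)) * r ^ DIM('a))"
    using assms by (simp add: emeasure_ball)
  finally show ?thesis .
qed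

lemma card_bound:
  fixes x :: "'a::euclidean_space"
  assumes "r > 0" "K = {k. dist x (ce k :: 'a) < r + 1/2}"
  shows "finite K \<and> real (card K) \<le> log 2 (4*r+2) + 2"
proof (cases "K = {}")
  case True
  have "log 2 (4*r+2) \<ge> 0" using assms by simp
  then show ?thesis using True by simp
next
  case False
  define k0 where "k0 = (LEAST k. k \<in> K)"
  have k0K: "k0 \<in> K" using False unfolding k0_def by (metis LeastI ex_in_conv)
  define T where "T = {..< nat \<lceil>log 2 (4*r+2)\<rceil>}"
  have sub: "K \<subseteq> insert k0 T"
  proof
    fix k assume kK: "k \<in> K"
    show "k \<in> insert k0 T"
    proof (cases "k = k0")
      case True then show ?thesis by simp
    next
      case False
      have "k0 \<le> k" unfolding k0_def using kK by (simp add: Least_le)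
      with False have lt: "k0 < k" by simp
      have "dist (ce k) (ce k0 :: 'a) \<le> dist x (ce k) + dist x (ce k0)"
        by (metis dist_commute dist_triangle)
      also have "\<dots> < 2*r+1" using kK k0K using assms(2) by simp
      finally have d: "\<bar>(2::real)^k - 2^k0\<bar> < 2*r+1" by (simp add: dist_ce)
      obtain m where m: "k = Suc m" using lt by (cases k) auto
      have "(2::real)^k0 \<le> 2^m" using lt m by (intro power_increasing) auto
      hence "(2::real)^k - 2^k0 \<ge> 2^k / 2" using m by simp
      hence "(2::real)^k < 4*r+2" using d by linarith
      hence "log 2 (2^k) < log 2 (4*r+2)" by (intro log_less) auto
      hence "real k < log 2 (4*r+2)" by (simp add: log_nat_power)
      hence "k < nat \<lceil>log 2 (4*r+2)\<rceil>" by linarith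
      then show ?thesis unfolding T_def by simp
    qed
  qed
  have fin: "finite K" using sub finite_subset unfolding T_def by blast
  have "card K \<le> card (insert k0 T)" using sub by (intro card_mono) (auto simp: T_def)
  also have "\<dots> \<le> card T + 1" by (simp add: card_insert_le_m1 card_insert_if)
  finally have "real (card K) \<le> real (nat \<lceil>log 2 (4*r+2)\<rceil>) + 1" unfolding T_def by simp
  also have "\<dots> \<le> log 2 (4*r+2) + 2"
  proof -
    have "log 2 (4*r+2) \<ge> 0" using assms by simp
    thus ?thesis by linarith
  qed
  finally show ?thesis using fin by simp
qed

lemma boundB:
  assumes "r > 0"
  shows "emeasure lebesgue (SS \<inter> ball (x::'a::euclidean_space) r)
     \<le> ennreal ((log 2 (4*r+2) + 2) * (unit_ball_vol (DIM('a)) * (1/2) ^ DIM('a)))"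
proof -
  define K where "K = {k. dist x (ce k :: 'a) < r + 1/2}"
  define w where "w = unit_ball_vol (DIM('a)) * (1/2::real) ^ DIM('a)"
  have w0: "w \<ge> 0" unfolding w_def by simp
  from card_bound[OF assms K_def] have fin: "finite K" and cK: "real (card K) \<le> log 2 (4*r+2) + 2"
    by auto
  have sub1: "SS \<inter> ball x r \<subseteq> (\<Union>k\<in>K. ball (ce k) (1/2))"
  proof
    fix y assume "y \<in> SS \<inter> ball x r"
    then obtain k where y: "y \<in> ball (ce k) (1/2)" "dist x y < r" unfolding SS_def by auto
    have "dist x (ce k) \<le> dist x y + dist y (ce k)" by (rule dist_triangle)
    also have "\<dots> < r + 1/2" using y by (simp add: dist_commute)
    finally show "y \<in> (\<Union>k\<in>K. ball (ce k) (1/2))" using y unfolding K_def by auto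
  qed
  have sub2: "(\<Union>k\<in>K. ball (ce k :: 'a) (1/2)) \<in> sets lebesgue"
    by (rule open_leb) auto
  have "emeasure lebesgue (SS \<inter> ball x r) \<le> emeasure lebesgue (\<Union>k\<in>K. ball (ce k :: 'a) (1/2))"
    by (rule emeasure_mono[OF sub1 sub2])
  also have "\<dots> \<le> (\<Sum>k\<in>K. emeasure lebesgue (ball (ce k :: 'a) (1/2)))"
    using fin by (intro emeasure_subadditive_finite) auto
  also have "\<dots> = (\<Sum>k\<in>K. ennreal w)"
    by (simp add: emeasure_ball w_def)
  also have "\<dots> = ennreal (real (card K) * w)"
    using w0 by (simp add: ennreal_of_nat_eq_real_of_nat ennreal_mult)
  also have "\<dots> \<le> ennreal ((log 2 (4*r+2) + 2) * w)"
    using cK w0 by (intro ennreal_leI mult_right_mono) auto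
  finally show ?thesis unfolding w_def .
qed

lemma lim1: fixes lam::real and n::nat assumes "lam > 0" "lam < n"
  shows "((\<lambda>r::real. r powr -lam * (V * r ^ n)) \<longlongrightarrow> 0) (at_right 0)"
  using assms by real_asymp

lemma lim2: fixes lam::real assumes "lam > 0"
  shows "((\<lambda>r::real. r powr -lam * (log 2 (4*r+2) + 2) * w) \<longlongrightarrow> 0) at_top"
proof -
  have "((\<lambda>r::real. r powr -lam * (log 2 (4*r+2) + 2)) \<longlongrightarrow> 0) at_top"
    using assms by real_asymp
  thus ?thesis by (rule tendsto_mult_left_zero)
qed

lemma Mbound:
  fixes x :: "'a::euclidean_space"
  assumes "r > 0" "p > 0"
  shows "morrey_M p lam (indicator SS) x r \<le>
    ennreal (r powr -lam * min (unit_ball_vol (DIM('a)) * r ^ DIM('a))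
        ((log 2 (4*r+2) + 2) * (unit_ball_vol (DIM('a)) * (1/2) ^ DIM('a))))"
proof -
  define a where "a = unit_ball_vol (DIM('a)) * r ^ DIM('a)"
  define b where "b = (log 2 (4*r+2) + 2) * (unit_ball_vol (DIM('a)) * (1/2::real) ^ DIM('a))"
  have a0: "a \<ge> 0" unfolding a_def using assms by simp
  have "log 2 (4*r+2) \<ge> 0" using assms by simp
  hence b0: "b \<ge> 0" unfolding b_def by simp
  have E: "emeasure lebesgue (SS \<inter> ball x r) \<le> ennreal (min a b)"
    using boundA[of r x] boundB[OF assms(1), of x] assms a0 b0
    by (simp add: a_def b_def min_ennreal[symmetric])
  have "morrey_M p lam (indicator SS) x r = ennreal (r powr -lam) * emeasure lebesgue (SS \<inter> ball x r)"
    unfolding morrey_M_def using int_eq[OF assms(2), of "ball x r"] by simp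
  also have "\<dots> \<le> ennreal (r powr -lam) * ennreal (min a b)"
    using E by (rule mult_left_mono) simp
  also have "\<dots> = ennreal (r powr -lam * min a b)"
    using a0 b0 by (simp add: ennreal_mult)
  finally show ?thesis unfolding a_def b_def .
qed

theorem theorem4p1:
  fixes p lam :: real
  assumes "0 < lam" "lam < real DIM('a::euclidean_space)" "1 \<le> p"
  shows "\<exists>f :: 'a \<Rightarrow> real. f \<in> V0_morrey p lam \<inter> Vinf_morrey p lam \<and>
     \<not> ((\<lambda>N::nat. SUP x. \<integral>\<^sup>+ y \<in> ball x 1.
            ennreal (\<bar>f y\<bar> powr p) * indicator (- ball 0 (real N)) y \<partial>lebesgue)
          \<longlonglongrightarrow> 0)"
proof -
  define f :: "'a \<Rightarrow> real" where "f = indicator SS"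
  define V where "V = unit_ball_vol (DIM('a))"
  define w where "w = V * (1/2::real) ^ DIM('a)"
  define g1 where "g1 = (\<lambda>r::real. r powr -lam * (V * r ^ DIM('a)))"
  define g2 where "g2 = (\<lambda>r::real. r powr -lam * (log 2 (4*r+2) + 2) * w)"
  define g where "g = (\<lambda>r::real. r powr -lam * min (V * r ^ DIM('a)) ((log 2 (4*r+2) + 2) * w))"
  have p0: "p > 0" using assms by simp
  have V0: "V > 0" unfolding V_def by simp
  have w0: "w > 0" unfolding w_def using V0 by simp
  have M: "morrey_M p lam f x r \<le> ennreal (g r)" if "r > 0" for x r
    using Mbound[OF that p0, of lam x] unfolding f_def g_def V_def w_def .
  have g_nonneg: "g r \<ge> 0" if "r > 0" for r
  proof -
    have "log 2 (4*r+2) \<ge> 0" using that by simp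
    thus ?thesis unfolding g_def using that V0 w0 by (intro mult_nonneg_nonneg) (auto simp: min_def)
  qed
  have gg1: "g r \<le> g1 r" if "r > 0" for r
    unfolding g_def g1_def by (intro mult_left_mono min.cobounded1) simp
  have gg2: "g r \<le> g2 r" if "r > 0" for r
    unfolding g_def g2_def mult.assoc by (intro mult_left_mono min.cobounded2) simp
  have L1: "(g1 \<longlongrightarrow> 0) (at_right 0)"
    unfolding g1_def using lim1[OF assms(1), of "DIM('a)"] assms(2) by simp
  have L2: "(g2 \<longlongrightarrow> 0) at_top"
    unfolding g2_def using lim2[OF assms(1)] .
  have Lg1: "(g \<longlongrightarrow> 0) (at_right 0)"
  proof (rule tendsto_sandwich[OF _ _ tendsto_const L1])
    show "\<forall>\<^sub>F r in at_right 0. 0 \<le> g r" using g_nonneg eventually_at_right_less by (rule eventually_mono[rotated]) 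
    show "\<forall>\<^sub>F r in at_right 0. g r \<le> g1 r" using gg1 eventually_at_right_less by (rule eventually_mono[rotated])
  qed
  have Lg2: "(g \<longlongrightarrow> 0) at_top"
  proof (rule tendsto_sandwich[OF _ _ tendsto_const L2])
    show "\<forall>\<^sub>F r in at_top. 0 \<le> g r" using g_nonneg eventually_gt_at_top[of 0] by (rule eventually_mono[rotated])
    show "\<forall>\<^sub>F r in at_top. g r \<le> g2 r" using gg2 eventually_gt_at_top[of 0] by (rule eventually_mono[rotated])
  qed
  obtain R where R: "\<And>r. r \<ge> R \<Longrightarrow> g r \<le> 1"
    using order_tendstoD(2)[OF Lg2, of 1] by (auto simp: eventually_at_top_linorder) (meson less_imp_le)
  define G where "G = max (max V 1) ((log 2 (4 * max R 1 + 2) + 2) * w)"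
  have G1: "1 \<le> G" unfolding G_def by simp
  have gG: "g r \<le> G" if "r > 0" for r
  proof (cases "r \<le> 1")
    case True
    have "g r \<le> g1 r" using gg1 that .
    also have "g1 r = V * r powr (real DIM('a) - lam)"
      unfolding g1_def using that by (simp add: powr_realpow[symmetric] powr_diff powr_minus divide_inverse mult.commute mult.left_commute)
    also have "\<dots> \<le> V * 1"
      using V0 that True assms(2) by (intro mult_left_mono powr_le1) auto
    also have "\<dots> \<le> G" unfolding G_def by simp
    finally show ?thesis .
  next
    case False
    show ?thesis
    proof (cases "r \<ge> R")
      case True then show ?thesis using R[OF True] G1 by linarith
    next
      case False2: False
      have "g r \<le> g2 r" using gg2 that .
      also have "g2 r \<le> 1 * (log 2 (4 * max R 1 + 2) + 2) * w"
        unfolding g2_def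
      proof (intro mult_right_mono mult_mono)
        show "r powr - lam \<le> 1" using False assms(1) powr_mono[of "-lam" 0 r] by simp
        show "log 2 (4 * r + 2) + 2 \<le> log 2 (4 * max R 1 + 2) + 2" using False False2 by simp
        show "0 \<le> log 2 (4 * r + 2) + 2" using that by simp
      qed (use w0 in auto)
      also have "\<dots> \<le> G" unfolding G_def by simp
      finally show ?thesis .
    qed
  qed
  have meas: "f \<in> borel_measurable lebesgue"
    unfolding f_def by (intro borel_measurable_indicator SS_sets)
  have fin: "(\<integral>\<^sup>+ y \<in> ball x r. ennreal (\<bar>f y\<bar> powr p) \<partial>lebesgue) < \<infinity>" if "r > 0" for x r
  proof -
    have "(\<integral>\<^sup>+ y \<in> ball x r. ennreal (\<bar>f y\<bar> powr p) \<partial>lebesgue) = emeasure lebesgue (SS \<inter> ball x r)"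
      unfolding f_def using int_eq[OF p0, of "ball x r"] by simp
    also have "\<dots> \<le> ennreal (unit_ball_vol (DIM('a)) * r ^ DIM('a))" using boundA[of r x] that by simp
    finally show ?thesis using ennreal_less_top infinity_ennreal_def order_le_less_trans by metis
  qed
  have sup: "(SUP xr \<in> UNIV \<times> {0<..}. morrey_M p lam f (fst xr) (snd xr)) < \<infinity>"
  proof -
    have "(SUP xr \<in> UNIV \<times> {0<..}. morrey_M p lam f (fst xr) (snd xr)) \<le> ennreal G"
    proof (rule SUP_least)
      fix xr :: "'a \<times> real" assume "xr \<in> UNIV \<times> {0<..}"
      hence "snd xr > 0" by auto
      thus "morrey_M p lam f (fst xr) (snd xr) \<le> ennreal G"
        using M[OF \<open>snd xr > 0\<close>, of "fst xr"] gG[OF \<open>snd xr > 0\<close>] by (meson ennreal_leI order_trans)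
    qed
    thus ?thesis using ennreal_less_top infinity_ennreal_def order_le_less_trans by metis
  qed
  have inM: "f \<in> morrey_space p lam"
    unfolding morrey_space_def using meas fin sup by blast
  have supb: "(SUP x. morrey_M p lam f x r) \<le> ennreal (g r)" if "r > 0" for r
    using M[OF that] by (rule SUP_least)
  have Eg1: "((\<lambda>r. ennreal (g r)) \<longlongrightarrow> 0) (at_right 0)"
    using tendsto_ennrealI[OF Lg1] by simp
  have Eg2: "((\<lambda>r. ennreal (g r)) \<longlongrightarrow> 0) at_top"
    using tendsto_ennrealI[OF Lg2] by simp
  have T1: "((\<lambda>r. SUP x. morrey_M p lam f x r) \<longlongrightarrow> 0) (at_right 0)"
  proof (rule tendsto_sandwich[OF _ _ tendsto_const Eg1])
    show "\<forall>\<^sub>F r in at_right 0. 0 \<le> (SUP x. morrey_M p lam f x r)" by simp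
    show "\<forall>\<^sub>F r in at_right 0. (SUP x. morrey_M p lam f x r) \<le> ennreal (g r)"
      using supb eventually_at_right_less by (rule eventually_mono[rotated])
  qed
  have T2: "((\<lambda>r. SUP x. morrey_M p lam f x r) \<longlongrightarrow> 0) at_top"
  proof (rule tendsto_sandwich[OF _ _ tendsto_const Eg2])
    show "\<forall>\<^sub>F r in at_top. 0 \<le> (SUP x. morrey_M p lam f x r)" by simp
    show "\<forall>\<^sub>F r in at_top. (SUP x. morrey_M p lam f x r) \<le> ennreal (g r)"
      using supb eventually_gt_at_top[of 0] by (rule eventually_mono[rotated])
  qed
  have inV: "f \<in> V0_morrey p lam \<inter> Vinf_morrey p lam"
    unfolding V0_morrey_def Vinf_morrey_def using inM T1 T2 by blast
  have low: "ennreal w \<le> (SUP x. \<integral>\<^sup>+ y \<in> ball x 1.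
            ennreal (\<bar>f y\<bar> powr p) * indicator (- ball 0 (real N)) y \<partial>lebesgue)" for N :: nat
  proof -
    define k where "k = Suc N"
    have kN: "real N + 1 \<le> 2 ^ k"
    proof -
      have "Suc N < 2 ^ Suc N" by (rule less_exp)
      hence "real (Suc N) \<le> real (2 ^ Suc N)" by linarith
      thus ?thesis unfolding k_def by simp
    qed
    have "ennreal w = emeasure lebesgue (ball (ce k :: 'a) (1/2))"
      by (simp add: emeasure_ball w_def V_def)
    also have "\<dots> = (\<integral>\<^sup>+ y. indicator (ball (ce k :: 'a) (1/2)) y \<partial>lebesgue)"
      by (rule nn_integral_indicator[symmetric]) (rule open_leb, simp)
    also have "\<dots> \<le> (\<integral>\<^sup>+ y \<in> ball (ce k) 1.
            ennreal (\<bar>f y\<bar> powr p) * indicator (- ball 0 (real N)) y \<partial>lebesgue)"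
    proof (rule nn_integral_mono)
      fix y :: 'a
      show "indicator (ball (ce k) (1/2)) y \<le> ennreal (\<bar>f y\<bar> powr p) * indicator (- ball 0 (real N)) y * indicator (ball (ce k) 1) y"
      proof (cases "y \<in> ball (ce k) (1/2)")
        case True
        have yS: "y \<in> SS" using True unfolding SS_def by auto
        have d: "dist (ce k) y < 1/2" using True by simp
        have "norm (ce k :: 'a) \<le> norm y + dist (ce k) y"
          by (metis dist_norm norm_triangle_sub add.commute)
        hence "norm y > real N" using d kN norm_ce[of k, where 'a='a] by linarith
        hence "y \<notin> ball 0 (real N)" by simp
        moreover have "y \<in> ball (ce k) 1" using d by simp
        ultimately show ?thesis using yS p0 True unfolding f_def by simp
      qed simp
    qed
    also have "\<dots> \<le> (SUP x. \<integral>\<^sup>+ y \<in> ball x 1.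
            ennreal (\<bar>f y\<bar> powr p) * indicator (- ball 0 (real N)) y \<partial>lebesgue)"
      by (rule SUP_upper) simp
    finally show ?thesis .
  qed
  have notT: "\<not> ((\<lambda>N::nat. SUP x. \<integral>\<^sup>+ y \<in> ball x 1.
            ennreal (\<bar>f y\<bar> powr p) * indicator (- ball 0 (real N)) y \<partial>lebesgue)
          \<longlonglongrightarrow> 0)"
  proof
    assume T: "(\<lambda>N::nat. SUP x. \<integral>\<^sup>+ y \<in> ball x 1.
            ennreal (\<bar>f y\<bar> powr p) * indicator (- ball 0 (real N)) y \<partial>lebesgue)
          \<longlonglongrightarrow> 0"
    have "ennreal w > 0" using w0 by simp
    from order_tendstoD(2)[OF T this] obtain N where
      "(SUP x. \<integral>\<^sup>+ y \<in> ball x 1.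
            ennreal (\<bar>f y\<bar> powr p) * indicator (- ball 0 (real N)) y \<partial>lebesgue) < ennreal w"
      by (auto simp: eventually_sequentially)
    with low[of N] leD show False by blast
  qed
  show ?thesis using inV notT by blast
qed

end
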